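(* Let $\mathcal U_n$ be the group of unitary operators on $\mathbb C^n$ and $\mathcal D_n=\{e^{ic}I: c\in\mathbb R\}$ its subgroup of scalar unitaries. Then $D(U,V)$ depends only on the cosets $U\mathcal D_n$ and $V\mathcal D_n$, and the induced function $D:(\mathcal U_n/\mathcal D_n)\times(\mathcal U_n/\mathcal D_n)\to\mathbb R$ is a metric on the quotient group $\mathcal U_n/\mathcal D_n$.
   Context: For unitary operators $U,V$ on $\mathbb C^n$ (standard inner product) define the u-distance $D(U,V)=\max_{\|\psi\|=1}\big(1-|\langle\psi,U^\dagger V\psi\rangle|^2\big)^{1/2}=\big(1-\min_{\|\psi\|=1}|\langle\psi,U^\dagger V\psi\rangle|^2\big)^{1/2}$. *)

theory Defs
  imports "HOL-Analysis.Analysis"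
begin

text \<open>Operators on C^n are represented as matrices of type complex^'n^'n, where the
  finite type 'n indexes the standard basis (n = CARD('n)).  Vectors are complex^'n
  with the standard (Euclidean) norm.\<close>

definition cinner :: "complex^'n \<Rightarrow> complex^'n \<Rightarrow> complex" where
  "cinner x y = (\<Sum>i\<in>UNIV. cnj (x $ i) * y $ i)"

definition adjoint_mat :: "complex^'n^'n \<Rightarrow> complex^'n^'n" where
  "adjoint_mat A = (\<chi> i j. cnj (A $ j $ i))"

definition unitary_mat :: "complex^'n^'n \<Rightarrow> bool" where
  "unitary_mat U \<longleftrightarrow> adjoint_mat U ** U = mat 1 \<and> U ** adjoint_mat U = mat 1"

definition unitaries :: "(complex^'n^'n) set" where
  "unitaries = {U. unitary_mat U}"

definition scalar_unitaries :: "(complex^'n^'n) set" where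
  "scalar_unitaries = {mat (cis c) | c. True}"

definition ucoset :: "complex^'n^'n \<Rightarrow> (complex^'n^'n) set" where
  "ucoset U = {U ** S | S. S \<in> scalar_unitaries}"

definition unitary_quotient :: "(complex^'n^'n) set set" where
  "unitary_quotient = ucoset ` unitaries"

definition udist :: "complex^'n^'n \<Rightarrow> complex^'n^'n \<Rightarrow> real" where
  "udist U V = Sup {sqrt (1 - (cmod (cinner \<psi> ((adjoint_mat U ** V) *v \<psi>)))\<^sup>2) | \<psi>. norm \<psi> = 1}"

text \<open>Induced function on the quotient (representatives chosen arbitrarily; set to 0
  outside the quotient, where it is irrelevant).\<close>
definition udist_quot :: "(complex^'n^'n) set \<Rightarrow> (complex^'n^'n) set \<Rightarrow> real" where
  "udist_quot A B = (if A \<in> unitary_quotient \<and> B \<in> unitary_quotient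
     then udist (SOME U. U \<in> A) (SOME V. V \<in> B) else 0)"

end

theory Submission
  imports Defs
begin

lemma norm_sq_vec: "(norm (x::complex^'n))\<^sup>2 = (\<Sum>i\<in>UNIV. (cmod (x$i))\<^sup>2)"
  unfolding norm_vec_def L2_set_def by (simp add: sum_nonneg)

lemma cmod_sq_c: "(complex_of_real (cmod z))\<^sup>2 = z * cnj z"
  by (metis complex_norm_square of_real_power)

lemma cinner_self: "cinner x x = complex_of_real ((norm x)\<^sup>2)"
  unfolding cinner_def norm_sq_vec of_real_sum
  by (rule sum.cong) (auto simp: cmod_sq_c mult.commute)

lemma cinner_cnj: "cnj (cinner x y) = cinner y x"
  unfolding cinner_def by (simp add: mult.commute)

lemma cinner_add_right: "cinner x (y + z) = cinner x y + cinner x z"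
  unfolding cinner_def by (simp add: distrib_left sum.distrib)

lemma cinner_diff_right: "cinner x (y - z) = cinner x y - cinner x z"
  unfolding cinner_def by (simp add: right_diff_distrib sum_subtractf)

lemma cinner_scale_right: "cinner x (c *s y) = c * cinner x y"
  unfolding cinner_def by (simp add: sum_distrib_left algebra_simps)

lemma cinner_diff_left: "cinner (x - y) z = cinner x z - cinner y z"
  unfolding cinner_def by (simp add: left_diff_distrib sum_subtractf)

lemma cinner_scale_left: "cinner (c *s x) y = cnj c * cinner x y"
  unfolding cinner_def by (simp add: sum_distrib_left algebra_simps)

lemma norm_smult_vec: "norm (c *s (x::complex^'n)) = cmod c * norm x"
  unfolding norm_vec_def by (simp add: norm_mult L2_set_right_distrib)

lemma expand:
  assumes "norm x = 1"
  shows "(norm (y - l *s x))\<^sup>2 = (norm y)\<^sup>2 - (cmod (cinner x y))\<^sup>2 + (cmod (l - cinner x y))\<^sup>2"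
proof -
  define a where "a = cinner x y"
  have ya: "cinner y x = cnj a" using cinner_cnj a_def by metis
  have "complex_of_real ((norm (y - l *s x))\<^sup>2) = cinner (y - l *s x) (y - l *s x)"
    by (simp add: cinner_self)
  also have "\<dots> = cinner y y - l * cnj a - cnj l * a + cnj l * l * cinner x x"
    by (simp add: cinner_diff_left cinner_diff_right cinner_scale_left cinner_scale_right ya a_def[symmetric] algebra_simps)
  also have "\<dots> = complex_of_real ((norm y)\<^sup>2 - (cmod a)\<^sup>2 + (cmod (l - a))\<^sup>2)"
    using assms by (simp add: cinner_self cmod_sq_c algebra_simps)
  finally show ?thesis unfolding a_def using of_real_eq_iff by blast
qed


lemma cs_unit:
  assumes "norm x = 1" shows "(cmod (cinner x y))\<^sup>2 \<le> (norm y)\<^sup>2"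
proof -
  have "(norm (y - cinner x y *s x))\<^sup>2 = (norm y)\<^sup>2 - (cmod (cinner x y))\<^sup>2"
    using expand[OF assms, of y "cinner x y"] by simp
  moreover have "0 \<le> (norm (y - cinner x y *s x))\<^sup>2" by simp
  ultimately show ?thesis by linarith
qed

lemma cs_unit2:
  assumes "norm x = 1" "norm y = 1" shows "cmod (cinner x y) \<le> 1"
  using cs_unit[OF assms(1), of y] assms(2) by (simp add: power_le_one_iff abs_le_square_iff)

definition tdist :: "complex^'n \<Rightarrow> complex^'n \<Rightarrow> real" where
  "tdist x y = sqrt (1 - (cmod (cinner x y))\<^sup>2)"

lemma tdist_le:
  assumes "norm x = 1" "norm y = 1" shows "tdist x y \<le> norm (y - l *s x)"
proof -
  have "1 - (cmod (cinner x y))\<^sup>2 \<le> (norm (y - l *s x))\<^sup>2"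
    using expand[OF assms(1), of y l] assms(2) by simp
  then have "sqrt (1 - (cmod (cinner x y))\<^sup>2) \<le> sqrt ((norm (y - l *s x))\<^sup>2)"
    by (rule real_sqrt_le_mono)
  then show ?thesis unfolding tdist_def by simp
qed

lemma tdist_eq:
  assumes "norm x = 1" "norm y = 1" shows "tdist x y = norm (y - cinner x y *s x)"
proof -
  have "1 - (cmod (cinner x y))\<^sup>2 = (norm (y - cinner x y *s x))\<^sup>2"
    using expand[OF assms(1), of y "cinner x y"] assms(2) by simp
  then have "sqrt (1 - (cmod (cinner x y))\<^sup>2) = sqrt ((norm (y - cinner x y *s x))\<^sup>2)"
    by simp
  then show ?thesis unfolding tdist_def by simp
qed

lemma tdist_triangle:
  assumes "norm x = 1" "norm y = 1" "norm z = 1"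
  shows "tdist x z \<le> tdist x y + tdist y z"
proof -
  define a where "a = cinner x y"
  define b where "b = cinner y z"
  have "tdist x z \<le> norm (z - (b * a) *s x)" using tdist_le assms by blast
  also have "z - (b * a) *s x = (z - b *s y) + b *s (y - a *s x)"
    by (simp add: vector_smult_assoc algebra_simps vec_eq_iff)
  also have "norm \<dots> \<le> norm (z - b *s y) + norm (b *s (y - a *s x))" by (rule norm_triangle_ineq)
  also have "norm (b *s (y - a *s x)) = cmod b * tdist x y"
    by (simp only: norm_smult_vec tdist_eq[OF assms(1,2)] a_def)
  also have "\<dots> \<le> tdist x y"
  proof -
    have "cmod b \<le> 1" unfolding b_def using cs_unit2 assms by blast
    moreover have "tdist x y \<ge> 0" unfolding tdist_def using cs_unit2[OF assms(1,2)]
      by (simp add: power_le_one)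
    ultimately show ?thesis by (simp add: mult_left_le_one_le)
  qed
  also have "norm (z - b *s y) = tdist y z" using tdist_eq[OF assms(2,3)] b_def by simp
  finally show ?thesis by simp
qed

lemma cinner_adj: "cinner x (A *v y) = cinner (adjoint_mat A *v x) y"
proof -
  have "cinner x (A *v y) = (\<Sum>i\<in>UNIV. \<Sum>j\<in>UNIV. cnj (x$i) * A$i$j * y$j)"
    unfolding cinner_def matrix_vector_mult_def by (simp add: sum_distrib_left mult.assoc)
  also have "\<dots> = (\<Sum>j\<in>UNIV. \<Sum>i\<in>UNIV. cnj (x$i) * A$i$j * y$j)" by (rule sum.swap)
  also have "\<dots> = cinner (adjoint_mat A *v x) y"
    unfolding cinner_def matrix_vector_mult_def adjoint_mat_def
    by (simp add: sum_distrib_right sum_distrib_left mult.commute mult.left_commute)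
  finally show ?thesis .
qed

lemma adj_adj[simp]: "adjoint_mat (adjoint_mat A) = A"
  unfolding adjoint_mat_def by (simp add: vec_eq_iff)

lemma adj_mult: "adjoint_mat (A ** B) = adjoint_mat B ** adjoint_mat A"
  unfolding adjoint_mat_def matrix_matrix_mult_def by (simp add: vec_eq_iff mult.commute)

lemma adj_mat: "adjoint_mat (mat c) = mat (cnj c)"
  unfolding adjoint_mat_def mat_def by (simp add: vec_eq_iff)

lemma mat_vec: "(mat a :: complex^'n^'n) *v x = a *s x"
proof -
  have "(\<Sum>j\<in>UNIV. (if i = j then a else 0) * x$j) = a * x$i" for i
  proof -
    have "(\<Sum>j\<in>UNIV. (if i = j then a else 0) * x$j) = (\<Sum>j\<in>UNIV. if i = j then a * x$j else 0)"
      by (rule sum.cong) auto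
    then show ?thesis by simp
  qed
  then show ?thesis unfolding matrix_vector_mult_def mat_def by (simp add: vec_eq_iff)
qed

lemma mat_mult_mat: "mat a ** mat b = (mat (a * b) :: complex^'n^'n)"
proof -
  have "(mat a ** mat b) *v x = mat (a * b) *v x" for x :: "complex^'n"
    by (simp add: matrix_vector_mul_assoc[symmetric] mat_vec vector_smult_assoc)
  then show ?thesis by (metis matrix_eq)
qed

lemma mv_smult: "(A :: complex^'n^'n) *v (c *s x) = c *s (A *v x)"
  unfolding matrix_vector_mult_def by (simp add: vec_eq_iff sum_distrib_left algebra_simps)

lemma iso_norm:
  assumes "adjoint_mat W ** W = mat 1" shows "norm (W *v x) = norm x"
proof -
  have "cinner (W *v x) (W *v x) = cinner x x"
    by (simp add: cinner_adj matrix_vector_mul_assoc assms)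
  then have "(norm (W *v x))\<^sup>2 = (norm x)\<^sup>2" by (simp add: cinner_self del: of_real_power)
  then show ?thesis by (simp add: power2_eq_iff_nonneg)
qed


definition ud :: "complex^'n^'n \<Rightarrow> real" where
  "ud W = Sup {tdist \<psi> (W *v \<psi>) | \<psi>. norm \<psi> = 1}"

lemma udist_ud: "udist U V = ud (adjoint_mat U ** V)"
  unfolding udist_def ud_def tdist_def ..

lemma norm_axis_c: "norm (axis i (1::complex) :: complex^'n) = 1"
proof -
  have "(norm (axis i (1::complex) :: complex^'n))\<^sup>2 = 1"
    unfolding norm_sq_vec axis_def by (simp add: if_distrib[of "\<lambda>t. (cmod t)\<^sup>2"] cong: if_cong)
  then show ?thesis by (simp add: power2_eq_1_iff)
qed

lemma tdist_bounds:
  assumes "norm x = 1" "norm y = 1" shows "0 \<le> tdist x y" "tdist x y \<le> 1"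
  using cs_unit2[OF assms] unfolding tdist_def by (auto simp: power_le_one)

lemma ud_props:
  assumes iso: "adjoint_mat W ** W = mat 1"
  shows "\<And>\<psi>. norm \<psi> = 1 \<Longrightarrow> tdist \<psi> (W *v \<psi>) \<le> ud W"
    and "\<And>c. (\<And>\<psi>. norm \<psi> = 1 \<Longrightarrow> tdist \<psi> (W *v \<psi>) \<le> c) \<Longrightarrow> ud W \<le> c"
    and "0 \<le> ud W"
proof -
  let ?S = "{tdist \<psi> (W *v \<psi>) | \<psi>. norm \<psi> = 1}"
  have ne: "?S \<noteq> {}" using norm_axis_c by blast
  have bdd: "bdd_above ?S"
  proof (rule bdd_aboveI[of _ 1])
    fix x assume "x \<in> ?S"
    then obtain \<psi> where "x = tdist \<psi> (W *v \<psi>)" "norm \<psi> = 1" by blast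
    then show "x \<le> 1" using tdist_bounds(2)[of \<psi> "W *v \<psi>"] iso_norm[OF iso, of \<psi>] by simp
  qed
  show up: "tdist \<psi> (W *v \<psi>) \<le> ud W" if "norm \<psi> = 1" for \<psi>
    unfolding ud_def by (rule cSup_upper[OF _ bdd]) (use that in blast)
  show "ud W \<le> c" if "\<And>\<psi>. norm \<psi> = 1 \<Longrightarrow> tdist \<psi> (W *v \<psi>) \<le> c" for c
    unfolding ud_def by (rule cSup_least[OF ne]) (use that in blast)
  show "0 \<le> ud W"
    using up[OF norm_axis_c] tdist_bounds(1)[OF norm_axis_c] iso_norm[OF iso]
    by (metis norm_axis_c order_trans)
qed

lemma tdist_scale:
  assumes "cmod k = 1" shows "tdist x (k *s v) = tdist x v"
  unfolding tdist_def by (simp add: cinner_scale_right norm_mult assms)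

lemma ud_adj: "ud (adjoint_mat W) = ud W"
proof -
  have "tdist \<psi> (adjoint_mat W *v \<psi>) = tdist \<psi> (W *v \<psi>)" for \<psi>
  proof -
    have "cinner \<psi> (adjoint_mat W *v \<psi>) = cnj (cinner \<psi> (W *v \<psi>))"
      by (simp add: cinner_adj cinner_cnj)
    then show ?thesis unfolding tdist_def by simp
  qed
  then show ?thesis unfolding ud_def by simp
qed

lemma udist_sym: "udist V U = udist U V"
  unfolding udist_ud by (metis adj_mult adj_adj ud_adj)

lemma udist_inv: "udist (U ** mat (cis a)) (V ** mat (cis b)) = udist U V"
proof -
  have "(adjoint_mat (U ** mat (cis a)) ** (V ** mat (cis b))) *v \<psi>
        = (cnj (cis a) * cis b) *s ((adjoint_mat U ** V) *v \<psi>)" for \<psi>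
    by (simp add: adj_mult adj_mat matrix_vector_mul_assoc[symmetric] mat_vec mv_smult vector_smult_assoc)
  moreover have "cmod (cnj (cis a) * cis b) = 1" by (simp add: norm_mult)
  ultimately show ?thesis unfolding udist_ud ud_def by (simp add: tdist_scale)
qed

lemma iso_prod:
  assumes "unitary_mat U" "unitary_mat V"
  shows "adjoint_mat (adjoint_mat U ** V) ** (adjoint_mat U ** V) = mat 1"
proof -
  have "adjoint_mat (adjoint_mat U ** V) ** (adjoint_mat U ** V) = adjoint_mat V ** (U ** adjoint_mat U) ** V"
    by (simp add: adj_mult matrix_mul_assoc)
  also have "\<dots> = mat 1" using assms unfolding unitary_mat_def by simp
  finally show ?thesis .
qed

lemma udist_nonneg: "unitary_mat U \<Longrightarrow> unitary_mat V \<Longrightarrow> 0 \<le> udist U V"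
  unfolding udist_ud using ud_props(3)[OF iso_prod] by blast

lemma udist_tri:
  fixes U V W :: "complex^'n^'n"
  assumes "unitary_mat U" "unitary_mat V" "unitary_mat W"
  shows "udist U W \<le> udist U V + udist V W"
proof -
  define A where "A = adjoint_mat U ** V"
  define B where "B = adjoint_mat V ** W"
  have AB: "adjoint_mat U ** W = A ** B"
    using assms(2) unfolding A_def B_def unitary_mat_def
    by (metis matrix_mul_assoc matrix_mul_lid)
  have iA: "adjoint_mat A ** A = mat 1" unfolding A_def using iso_prod assms by blast
  have iB: "adjoint_mat B ** B = mat 1" unfolding B_def using iso_prod assms by blast
  have iAB: "adjoint_mat (A ** B) ** (A ** B) = mat 1" unfolding AB[symmetric] using iso_prod assms by blast
  show ?thesis unfolding udist_ud AB A_def[symmetric] B_def[symmetric]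
  proof (rule ud_props(2)[OF iAB])
    fix \<psi> :: "complex^'n" assume u: "norm \<psi> = 1"
    have u2: "norm (B *v \<psi>) = 1" using iso_norm[OF iB] u by simp
    have u3: "norm (A *v (B *v \<psi>)) = 1" using iso_norm[OF iA] u2 by simp
    have "tdist \<psi> ((A ** B) *v \<psi>) = tdist \<psi> (A *v (B *v \<psi>))" by (simp add: matrix_vector_mul_assoc)
    also have "\<dots> \<le> tdist \<psi> (B *v \<psi>) + tdist (B *v \<psi>) (A *v (B *v \<psi>))"
      by (rule tdist_triangle[OF u u2 u3])
    also have "\<dots> \<le> ud B + ud A" using ud_props(1)[OF iB u] ud_props(1)[OF iA u2] by simp
    finally show "tdist \<psi> ((A ** B) *v \<psi>) \<le> ud A + ud B" by simp
  qed
qed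


lemma col_axis: "((W::complex^'n^'n) *v axis j 1) $ i = W $ i $ j"
proof -
  have "(\<Sum>l\<in>UNIV. W $ i $ l * (if l = j then 1 else 0)) = (\<Sum>l\<in>UNIV. if l = j then W $ i $ l else 0)"
    by (rule sum.cong) auto
  then show ?thesis unfolding matrix_vector_mult_def axis_def by simp
qed

lemma axis_comp: "(axis j (1::complex) :: complex^'n) $ i = (if i = j then 1 else 0)"
  unfolding axis_def by simp

lemma eig_all:
  fixes W :: "complex^'n^'n"
  assumes "\<And>\<psi>. norm \<psi> = 1 \<Longrightarrow> \<exists>a. W *v \<psi> = a *s \<psi>"
  shows "\<exists>a. W *v \<psi> = a *s \<psi>"
proof (cases "\<psi> = 0")
  case True then show ?thesis by (auto simp: matrix_vector_mult_def vec_eq_iff)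
next
  case False
  define r where "r = norm \<psi>"
  have r: "r > 0" using False r_def by simp
  define \<phi> where "\<phi> = complex_of_real (1 / r) *s \<psi>"
  have "norm \<phi> = 1" unfolding \<phi>_def norm_smult_vec using r r_def by (simp add: norm_divide)
  then obtain a where a: "W *v \<phi> = a *s \<phi>" using assms by blast
  have "\<psi> = complex_of_real r *s \<phi>" unfolding \<phi>_def using r by (simp add: vector_smult_assoc)
  then have "W *v \<psi> = a *s \<psi>"
    by (metis a mv_smult vector_smult_assoc mult.commute)
  then show ?thesis by blast
qed

lemma eig_scalar:
  fixes W :: "complex^'n^'n"
  assumes "\<And>\<psi>. \<exists>a. W *v \<psi> = a *s \<psi>"
  shows "\<exists>k. W = mat k"
proof -
  have "\<forall>j. \<exists>c. W *v axis j 1 = c *s axis j 1" using assms by blast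
  from choice[OF this] obtain a where a: "\<And>j. W *v axis j 1 = a j *s axis j 1" by blast
  have offd: "W $ i $ j = (if i = j then a j else 0)" for i j
    using arg_cong[OF a[of j], of "\<lambda>v. v $ i"] by (simp add: col_axis axis_comp)
  have eq: "a i = a j" for i j
  proof (cases "i = j")
    case False
    obtain c where c: "W *v (axis i 1 + axis j 1) = c *s (axis i 1 + axis j 1)" using assms by blast
    have "W *v (axis i 1 + axis j 1) = W *v axis i 1 + W *v axis j 1"
      by (simp add: matrix_vector_right_distrib)
    then have "\<And>l. (W *v axis i 1) $ l + (W *v axis j 1) $ l = c * ((axis i 1 + axis j 1) $ l)"
      using c by (metis vector_add_component vector_smult_component)
    from this[of i] this[of j] False show ?thesis
      by (simp add: col_axis offd axis_comp)
  qed simp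
  have "W $ i $ j = mat (a undefined) $ i $ j" for i j
    using offd[of i j] eq[of j undefined] by (simp add: mat_def)
  then have "W = mat (a undefined)" by (simp add: vec_eq_iff)
  then show ?thesis by blast
qed

lemma ucoset_self: "U \<in> ucoset U"
proof -
  have "U = U ** mat (cis 0)" by simp
  then show ?thesis unfolding ucoset_def scalar_unitaries_def by blast
qed

lemma ucoset_eq:
  assumes "V \<in> ucoset U" shows "ucoset V = ucoset U"
proof -
  obtain c where V: "V = U ** mat (cis c)" using assms unfolding ucoset_def scalar_unitaries_def by blast
  show ?thesis
  proof
    show "ucoset V \<subseteq> ucoset U"
      unfolding ucoset_def scalar_unitaries_def V
      by (auto simp: matrix_mul_assoc[symmetric] mat_mult_mat cis_mult)
    show "ucoset U \<subseteq> ucoset V"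
    proof
      fix X assume "X \<in> ucoset U"
      then obtain d where X: "X = U ** mat (cis d)" unfolding ucoset_def scalar_unitaries_def by blast
      have "X = V ** mat (cis (d - c))"
        unfolding X V by (simp add: matrix_mul_assoc[symmetric] mat_mult_mat cis_mult)
      then show "X \<in> ucoset V" unfolding ucoset_def scalar_unitaries_def by blast
    qed
  qed
qed

lemma udist_coset:
  assumes "U' \<in> ucoset U" "V' \<in> ucoset V" shows "udist U' V' = udist U V"
proof -
  obtain a b where "U' = U ** mat (cis a)" "V' = V ** mat (cis b)"
    using assms unfolding ucoset_def scalar_unitaries_def by blast
  then show ?thesis by (simp add: udist_inv)
qed

lemma udist_self: "unitary_mat (U::complex^'n^'n) \<Longrightarrow> udist U U = 0"
proof -
  assume u: "unitary_mat U"
  then have i: "adjoint_mat U ** U = mat 1" unfolding unitary_mat_def by blast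
  have "ud (mat 1 :: complex^'n^'n) \<le> 0"
  proof (rule ud_props(2))
    show "adjoint_mat (mat 1) ** mat 1 = (mat 1 :: complex^'n^'n)" by (simp add: adj_mat)
    fix \<psi> :: "complex^'n" assume "norm \<psi> = 1"
    then show "tdist \<psi> (mat 1 *v \<psi>) \<le> 0" unfolding tdist_def by (simp add: cinner_self)
  qed
  moreover have "0 \<le> ud (mat 1 :: complex^'n^'n)" by (rule ud_props(3)) (simp add: adj_mat)
  ultimately show ?thesis unfolding udist_ud i by simp
qed

lemma udist_zero:
  fixes U V :: "complex^'n^'n"
  assumes uU: "unitary_mat U" and uV: "unitary_mat V"
  shows "udist U V = 0 \<longleftrightarrow> ucoset U = ucoset V"
proof
  assume "ucoset U = ucoset V"
  then have "V \<in> ucoset U" using ucoset_self by blast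
  then have "udist U V = udist U U" using udist_coset ucoset_self by blast
  then show "udist U V = 0" using udist_self uU by simp
next
  assume z: "udist U V = 0"
  define W where "W = adjoint_mat U ** V"
  have iW: "adjoint_mat W ** W = mat 1" unfolding W_def using iso_prod uU uV by blast
  have "\<exists>a. W *v \<psi> = a *s \<psi>" if u: "norm \<psi> = 1" for \<psi>
  proof -
    have u2: "norm (W *v \<psi>) = 1" using iso_norm[OF iW] u by simp
    have "tdist \<psi> (W *v \<psi>) \<le> 0" using ud_props(1)[OF iW u] z unfolding udist_ud W_def by simp
    then have "norm (W *v \<psi> - cinner \<psi> (W *v \<psi>) *s \<psi>) = 0"
      using tdist_eq[OF u u2] tdist_bounds(1)[OF u u2] by simp
    then show ?thesis by auto
  qed
  then have "\<And>\<psi>. \<exists>a. W *v \<psi> = a *s \<psi>" by (rule eig_all)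
  then obtain k where k: "W = mat k" using eig_scalar by blast
  have "norm (W *v axis undefined 1) = 1" using iso_norm[OF iW] norm_axis_c by simp
  then have ck: "cmod k = 1" by (simp add: k mat_vec norm_smult_vec norm_axis_c)
  then have "k \<noteq> 0" by auto
  then have "cis (Arg k) = k" using ck by (simp add: cis_Arg sgn_div_norm)
  then have "k = cis (Arg k)" by simp
  moreover have "V = U ** W" using uU unfolding W_def unitary_mat_def
    by (simp add: matrix_mul_assoc)
  ultimately have "V = U ** mat (cis (Arg k))" using k by simp
  then have "V \<in> ucoset U" unfolding ucoset_def scalar_unitaries_def by blast
  from ucoset_eq[OF this] show "ucoset U = ucoset V" by simp
qed

lemma udist_quot_eq:
  assumes "unitary_mat U" "unitary_mat V"
  shows "udist_quot (ucoset U) (ucoset V) = udist U V"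
proof -
  have "ucoset U \<in> unitary_quotient" "ucoset V \<in> unitary_quotient"
    using assms unfolding unitary_quotient_def unitaries_def by auto
  moreover have "(SOME X. X \<in> ucoset U) \<in> ucoset U" "(SOME X. X \<in> ucoset V) \<in> ucoset V"
    using ucoset_self by (metis someI)+
  ultimately show ?thesis unfolding udist_quot_def using udist_coset by simp
qed

theorem mainTheorem4:
  shows "(\<forall>U\<in>(unitaries :: (complex^'n^'n) set). \<forall>V\<in>unitaries. \<forall>U'\<in>ucoset U. \<forall>V'\<in>ucoset V.
            udist U' V' = udist U V)
         \<and> Metric_space (unitary_quotient :: (complex^'n^'n) set set) udist_quot"
proof (intro conjI ballI)
  show "udist U' V' = udist U V" if "U' \<in> ucoset U" "V' \<in> ucoset V" for U V U' V' :: "complex^'n^'n"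
    using udist_coset that by blast
  have Q: "\<exists>U. unitary_mat U \<and> A = ucoset U" if "A \<in> (unitary_quotient :: (complex^'n^'n) set set)" for A
    using that unfolding unitary_quotient_def unitaries_def by auto
  show "Metric_space (unitary_quotient :: (complex^'n^'n) set set) udist_quot"
  proof
    fix A B :: "(complex^'n^'n) set"
    show "0 \<le> udist_quot A B"
    proof (cases "A \<in> unitary_quotient \<and> B \<in> unitary_quotient")
      case True
      then obtain U V where uU: "unitary_mat U" and A: "A = ucoset U" and uV: "unitary_mat V" and B: "B = ucoset V"
        using Q by blast
      show ?thesis unfolding A B udist_quot_eq[OF uU uV] by (rule udist_nonneg[OF uU uV])
    next
      case False then show ?thesis unfolding udist_quot_def by auto
    qed
    show "udist_quot A B = udist_quot B A"
    proof (cases "A \<in> unitary_quotient \<and> B \<in> unitary_quotient")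
      case True
      then obtain U V where uU: "unitary_mat U" and A: "A = ucoset U" and uV: "unitary_mat V" and B: "B = ucoset V"
        using Q by blast
      show ?thesis unfolding A B udist_quot_eq[OF uU uV] udist_quot_eq[OF uV uU] by (rule udist_sym[symmetric])
    next
      case False then show ?thesis unfolding udist_quot_def by auto
    qed
  next
    fix A B :: "(complex^'n^'n) set"
    assume "A \<in> unitary_quotient" "B \<in> unitary_quotient"
    then obtain U V where uU: "unitary_mat U" and A: "A = ucoset U" and uV: "unitary_mat V" and B: "B = ucoset V"
      using Q by blast
    show "udist_quot A B = 0 \<longleftrightarrow> A = B"
      unfolding A B udist_quot_eq[OF uU uV] by (rule udist_zero[OF uU uV])
  next
    fix A B C :: "(complex^'n^'n) set"
    assume "A \<in> unitary_quotient" "B \<in> unitary_quotient" "C \<in> unitary_quotient"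
    then obtain U V W where uU: "unitary_mat U" and A: "A = ucoset U" and uV: "unitary_mat V" and B: "B = ucoset V"
      and uW: "unitary_mat W" and C: "C = ucoset W" using Q by meson
    show "udist_quot A C \<le> udist_quot A B + udist_quot B C"
      unfolding A B C udist_quot_eq[OF uU uV] udist_quot_eq[OF uV uW] udist_quot_eq[OF uU uW]
      by (rule udist_tri[OF uU uV uW])
  qed
qed

end
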